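(* Fix a constant $\gamma > 0$. In the real-time oblivious erasure correction protocol on $k$ message symbols, in order for the receiver to recover a $(1-\gamma)$ fraction of the message symbols, the feedback channel needs to successfully transmit at most $O(1)$ bits.
   Context: Real-time oblivious erasure correction protocol on $k$ message symbols $x_1,\dots,x_k \in \mathbb{F}_2$: a sender transmits an unbounded stream of encoding symbols over a binary erasure channel with unknown erasure rate. The sender maintains a counter $r$ (initially $0$), the number of symbols the receiver has decoded as reported via feedback. Each encoding symbol uses degree $d(r) = \lfloor (k+1)/(k-r) \rfloor$ for $0 \le r \le k-2$ (and $d(k-1)=k$): the sender picks $d=d(r)$ indices uniformly at random from $\{1,\dots,k\}$ and sends the XOR of the corresponding symbols together with the indices and $d$. The receiver processes each received encoding symbol immediately: if exactly one of its indices is unknown it recovers that symbol by XORing with the known symbols and increments its count $r$; otherwise it discards the symbol. The receiver sends a one-bit feedback message (acknowledgement) to the sender exactly when the value of $\lfloor (k+1)/(k-r)\rfloor$ changes (i.e., the current degree differs from it), and the sender then updates its counter. *)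

theory Defs
  imports Complex_Main
begin

text \<open>Degree used by the sender when its counter is r (k message symbols):
  d(r) = floor((k+1)/(k-r)) for r \<le> k-2, and d(k-1) = k.
  (For r \<ge> k the value is irrelevant; natural-number division by 0 gives 0.)\<close>
definition deg :: "nat \<Rightarrow> nat \<Rightarrow> nat" where
  "deg k r = (if Suc r = k then k else (k + 1) div (k - r))"

text \<open>A run of the receiver is described by its decoded-symbol count over time:
  rs t is the number of decoded symbols after t received encoding symbols have
  been processed.\<close>
definition valid_run :: "(nat \<Rightarrow> nat) \<Rightarrow> bool" where
  "valid_run rs \<longleftrightarrow> rs 0 = 0 \<and> (\<forall>t. rs (Suc t) = rs t \<or> rs (Suc t) = Suc (rs t))"

text \<open>Number of one-bit feedback messages sent during the first T processing steps:
  an acknowledgement is sent at step t exactly when the degree value for the new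
  count differs from the degree currently in use (that of the previous count,
  since every earlier acknowledgement was delivered).\<close>
definition feedback_count :: "nat \<Rightarrow> (nat \<Rightarrow> nat) \<Rightarrow> nat \<Rightarrow> nat" where
  "feedback_count k rs T = card {t. t < T \<and> deg k (rs (Suc t)) \<noteq> deg k (rs t)}"

end

theory Submission
  imports Defs
begin

lemma run_mono:
  assumes "valid_run rs" "a \<le> b" shows "rs a \<le> rs b"
proof -
  have "\<And>n. rs n \<le> rs (Suc n)" using assms(1) unfolding valid_run_def
    by (metis le_SucI order_refl)
  then show ?thesis using assms(2) by (metis lift_Suc_mono_le)
qed

lemma deg_mono:
  assumes "r1 \<le> r2" "Suc r2 < k" shows "deg k r1 \<le> deg k r2"
  using assms unfolding deg_def by (simp add: div_le_mono2)

lemma deg_bound: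
  fixes \<gamma> :: real
  assumes g: "\<gamma> > 0" and kb: "3 \<le> \<gamma> * real k" and r: "real r < (1 - \<gamma>) * real k + 1"
    and r2: "Suc r < k"
  shows "real (deg k r) \<le> 3 / \<gamma>"
proof -
  have k1: "real k \<ge> 1" using kb g
  proof -
    have "k \<noteq> 0" using kb by (intro notI) simp
    then show ?thesis by simp
  qed
  have dk: "deg k r = (k+1) div (k - r)" using r2 unfolding deg_def by simp
  have m: "real (k - r) > \<gamma> * real k - 1" using r r2 by (simp add: of_nat_diff algebra_simps)
  have m2: "real (k - r) \<ge> (2/3) * (\<gamma> * real k)" using m kb by linarith
  have mpos: "real (k - r) > 0" using r2 by simp
  have "real ((k+1) div (k - r)) \<le> real (k+1) / real (k - r)"
    by (rule of_nat_div_le_of_nat)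
  also have "\<dots> \<le> real (k+1) / ((2/3) * (\<gamma> * real k))"
  proof (rule divide_left_mono)
    show "(2/3) * (\<gamma> * real k) \<le> real (k - r)" by (rule m2)
    show "0 \<le> real (k+1)" by simp
    show "0 < real (k - r) * ((2/3) * (\<gamma> * real k))" using mpos g k1 by simp
  qed
  also have "\<dots> = 3 * real (k+1) / (2 * \<gamma> * real k)" by (simp add: algebra_simps)
  also have "\<dots> \<le> 3 / \<gamma>"
  proof -
    have "3 * real (k+1) \<le> 3 / \<gamma> * (2 * \<gamma> * real k)" using g k1 by simp
    then show ?thesis using g k1 by (subst divide_le_eq) auto
  qed
  finally show ?thesis using dk by simp
qed

theorem lemma4:
  fixes \<gamma> :: real
  assumes "\<gamma> > 0"
  shows "\<exists>C::nat. \<forall>(k::nat) (rs::nat \<Rightarrow> nat) (T::nat).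
           valid_run rs \<longrightarrow> (\<forall>t<T. real (rs t) < (1 - \<gamma>) * real k) \<longrightarrow>
           feedback_count k rs T \<le> C"
proof (intro exI allI impI)
  fix k rs T
  assume v: "valid_run rs" and b: "\<forall>t<T. real (rs t) < (1 - \<gamma>) * real k"
  define S where "S = {t. t < T \<and> deg k (rs (Suc t)) \<noteq> deg k (rs t)}"
  have fc: "feedback_count k rs T = card S" unfolding feedback_count_def S_def ..
  have finS: "finite S" unfolding S_def by auto
  have step: "rs (Suc t) = Suc (rs t)" if "t \<in> S" for t
  proof -
    have "rs (Suc t) = rs t \<or> rs (Suc t) = Suc (rs t)" using v unfolding valid_run_def by blast
    moreover have "rs (Suc t) \<noteq> rs t" using that unfolding S_def by auto
    ultimately show ?thesis by blast
  qed
  have lt: "rs t1 < rs t2" if "t1 \<in> S" "t1 < t2" for t1 t2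
  proof -
    have "rs (Suc t1) \<le> rs t2" using run_mono[OF v] that by simp
    then show ?thesis using step[OF that(1)] by simp
  qed
  have bk: "real (rs t) < (1 - \<gamma>) * real k" if "t \<in> S" for t
    using that b unfolding S_def by auto
  show "feedback_count k rs T \<le> nat \<lceil>3 / \<gamma>\<rceil> + 1"
  proof (cases "\<gamma> * real k < 3")
    case True
    have "inj_on rs S"
    proof (rule inj_onI)
      fix x y assume "x \<in> S" "y \<in> S" "rs x = rs y"
      then show "x = y" using lt[of x y] lt[of y x] by (cases rule: linorder_cases[of x y]) auto
    qed
    moreover have "rs ` S \<subseteq> {..<k}"
    proof
      fix x assume "x \<in> rs ` S"
      then obtain t where "t \<in> S" "x = rs t" by auto
      then have "real x < (1 - \<gamma>) * real k" using bk by simp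
      also have "\<dots> \<le> real k" using assms by (simp add: algebra_simps)
      finally show "x \<in> {..<k}" by simp
    qed
    ultimately have "card S \<le> k" using card_inj_on_le[of rs S "{..<k}"] by simp
    moreover have "real k \<le> 3 / \<gamma>" using True assms by (simp add: field_simps)
    ultimately show ?thesis using fc by linarith
  next
    case False
    then have kb: "3 \<le> \<gamma> * real k" by simp
    have small: "Suc (Suc (rs t)) < k" and rb: "real (rs t) + 1 + 1 < (1 - \<gamma>) * real k + 1 + 1"
      if "t \<in> S" for t
    proof -
      show "real (rs t) + 1 + 1 < (1 - \<gamma>) * real k + 1 + 1" using bk[OF that] by simp
      have "real (rs t) + 3 < real k" using bk[OF that] kb by (simp add: algebra_simps)
      then show "Suc (Suc (rs t)) < k" by linarith
    qed
    define f where "f t = deg k (rs (Suc t))" for t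
    have inj: "inj_on f S"
    proof (rule inj_onI)
      fix x y assume xs: "x \<in> S" and ys: "y \<in> S" and e: "f x = f y"
      have key: "f a < f c" if as: "a \<in> S" and cs: "c \<in> S" and ac: "a < c" for a c
      proof -
        have "rs (Suc a) \<le> rs c" using run_mono[OF v] ac by simp
        then have "deg k (rs (Suc a)) \<le> deg k (rs c)"
          using small[OF cs] by (intro deg_mono) auto
        moreover have "deg k (rs c) \<le> deg k (rs (Suc c))"
          using small[OF cs] step[OF cs] by (intro deg_mono) auto
        moreover have "deg k (rs (Suc c)) \<noteq> deg k (rs c)" using cs unfolding S_def by auto
        ultimately show ?thesis unfolding f_def by linarith
      qed
      show "x = y" using key[OF xs ys] key[OF ys xs] e by (cases rule: linorder_cases[of x y]) auto
    qed
    have "f ` S \<subseteq> {..nat \<lceil>3 / \<gamma>\<rceil>}"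
    proof
      fix x assume "x \<in> f ` S"
      then obtain t where ts: "t \<in> S" and xe: "x = f t" by auto
      have "real (deg k (rs (Suc t))) \<le> 3 / \<gamma>"
        using deg_bound[OF assms kb, of "rs (Suc t)"] bk[OF ts] small[OF ts] step[OF ts] by simp
      then have "deg k (rs (Suc t)) \<le> nat \<lceil>3 / \<gamma>\<rceil>" by linarith
      then show "x \<in> {..nat \<lceil>3 / \<gamma>\<rceil>}" using xe f_def by simp
    qed
    then have "card S \<le> card {..nat \<lceil>3 / \<gamma>\<rceil>}" using card_inj_on_le[OF inj] by (metis card_atMost finite_atMost)
    then show ?thesis using fc by simp
  qed
qed

end
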